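(* Let $k\ge3$ be an integer and let $I=(a_1,\dots,a_n)\in(0,1]^n$ with $n\le k$ and $\sum_{i=1}^n a_i\le1$. Then $w_2(I):=\sum_{i=1}^n w_2(a_i)\le\lambda_k-\frac1k$.
   Context: Define $\pi_1=2$, $\pi_{i+1}=\pi_i(\pi_i-1)+1$ for $i\ge1$, and $\lambda_j=\sum_{i=1}^j\max\{\frac{1}{\pi_i-1},\frac1j\}$ for $j\ge1$. For fixed $k$, the weight function $w_2:(0,1]\to\mathbb{R}$ is $w_2(x)=1-\frac1k$ for $x\in(\frac12,1]$; $w_2(x)=\frac1j$ for $x\in(\frac{1}{j+1},\frac1j]$, $j=2,\dots,k-1$; and $w_2(x)=\frac1k$ for $x\in(0,\frac1k]$. *)

theory Defs
  imports Complex_Main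
begin

(* Sylvester-type sequence: sylv 1 = 2, sylv (i+1) = sylv i * (sylv i - 1) + 1.
   The value at index 0 is an unused dummy. *)
fun sylv :: "nat \<Rightarrow> nat" where
  "sylv 0 = 1"
| "sylv (Suc 0) = 2"
| "sylv (Suc (Suc i)) = sylv (Suc i) * (sylv (Suc i) - 1) + 1"

definition lam :: "nat \<Rightarrow> real" where
  "lam j = (\<Sum>i=1..j. max (1 / (real (sylv i) - 1)) (1 / real j))"

definition w2 :: "nat \<Rightarrow> real \<Rightarrow> real" where
  "w2 k x =
     (if 1/2 < x then 1 - 1 / real k
      else if x \<le> 1 / real k then 1 / real k
      else 1 / real (THE j::nat. 2 \<le> j \<and> j \<le> k - 1 \<and>
                          1 / real (j + 1) < x \<and> x \<le> 1 / real j))"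

end

theory Submission
  imports Defs
begin

definition cls :: "real \<Rightarrow> nat" where "cls a = nat \<lfloor>1/a\<rfloor>"
definition F :: "nat \<Rightarrow> real \<Rightarrow> real" where
  "F k a = max 0 (1 / real (cls a) - 1 / real k)"
definition g :: "nat \<Rightarrow> nat \<Rightarrow> real" where
  "g k i = max 0 (1 / (real (sylv i) - 1) - 1 / real k)"

lemma sylv_ge2: "i \<ge> 1 \<Longrightarrow> sylv i \<ge> 2"
proof (induction i)
  case 0 then show ?case by simp
next
  case (Suc i) then show ?case
  proof (cases i)
    case 0 then show ?thesis by simp
  next
    case (Suc m)
    then have "sylv i \<ge> 2" using Suc.IH by simp
    then have "sylv i * 1 \<le> sylv i * (sylv i - 1)" by (intro mult_le_mono2) simp
    then have h: "sylv i * (sylv i - 1) \<ge> 2" using \<open>sylv i \<ge> 2\<close> by linarith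
    have "sylv (Suc i) = sylv i * (sylv i - 1) + 1" using Suc by simp
    then show ?thesis using h by linarith
  qed
qed

lemma sylv_ge: "i \<ge> 1 \<Longrightarrow> sylv i \<ge> i + 1"
proof (induction i)
  case 0 then show ?case by simp
next
  case (Suc i) then show ?case
  proof (cases i)
    case 0 then show ?thesis by simp
  next
    case (Suc m)
    then have a: "sylv i \<ge> i + 1" "sylv i \<ge> 2" using Suc.IH sylv_ge2 by auto
    then have b0: "sylv i * 1 \<le> sylv i * (sylv i - 1)" by (intro mult_le_mono2) simp
    then have b: "sylv i * (sylv i - 1) \<ge> sylv i" by simp
    have "sylv (Suc i) = sylv i * (sylv i - 1) + 1" using Suc by simp
    then show ?thesis using a b by linarith
  qed
qed

lemma sylv_rec: "t \<ge> 1 \<Longrightarrow> real (sylv (Suc t)) - 1 = (real (sylv t) - 1) * real (sylv t)"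
proof -
  assume "t \<ge> 1"
  then obtain m where m: "t = Suc m" by (cases t) auto
  have "sylv t \<ge> 2" using sylv_ge2[OF \<open>t \<ge> 1\<close>] .
  then have "sylv t \<ge> 1" by simp
  then show ?thesis using m by (simp add: of_nat_diff algebra_simps)
qed

lemma cls_bounds:
  assumes "0 < a" shows "real (cls a) \<le> 1/a" "1/a < real (cls a) + 1"
proof -
  have "0 \<le> \<lfloor>1/a\<rfloor>" using assms by simp
  then have e: "real (cls a) = of_int \<lfloor>1/a\<rfloor>" unfolding cls_def by simp
  show "real (cls a) \<le> 1/a" unfolding e by simp
  show "1/a < real (cls a) + 1" unfolding e by linarith
qed

lemma cls_lower: assumes "0 < a" shows "1 / (real (cls a) + 1) < a"
proof -
  have "1 / a < real (cls a) + 1" using cls_bounds(2)[OF assms] .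
  then have "1 < (real (cls a) + 1) * a" using assms by (simp add: pos_divide_less_eq)
  moreover have "real (cls a) + 1 > 0" by simp
  ultimately have "1 < a * (real (cls a) + 1)" "real (cls a) + 1 > 0" by (simp_all only: mult.commute)
  then show ?thesis by (simp add: pos_divide_less_eq)
qed

lemma cls_ge: assumes "0 < a" "a \<le> 1 / real q" "q \<ge> 1" shows "q \<le> cls a"
proof -
  have "real q \<le> 1/a" using assms by (simp add: field_simps)
  then have "int q \<le> \<lfloor>1/a\<rfloor>" by (simp add: le_floor_iff)
  then show ?thesis unfolding cls_def by simp
qed

lemma cls_eq: assumes "0 < a" "1 / (real q + 1) < a" "a \<le> 1 / real q" "q \<ge> 1" shows "cls a = q"
proof -
  have "q \<le> cls a" using cls_ge assms by blast
  moreover have "1/a < real q + 1" using assms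
  proof -
    have "1 < a * (real q + 1)" using assms(2) by (simp add: pos_divide_less_eq add_pos_pos)
    then have "1 < (real q + 1) * a" by (simp only: mult.commute)
    then show ?thesis using assms(1) by (simp add: pos_divide_less_eq)
  qed
  then have "real (cls a) < real q + 1" using cls_bounds(1)[OF assms(1)] by linarith
  ultimately show ?thesis by simp
qed

lemma F_zero: "k \<ge> 1 \<Longrightarrow> cls a \<ge> k \<Longrightarrow> F k a = 0"
  unfolding F_def by (simp add: frac_le)

lemma F_pos: "k \<ge> 1 \<Longrightarrow> 1 \<le> cls a \<Longrightarrow> cls a \<le> k \<Longrightarrow> F k a = 1 / real (cls a) - 1 / real k"
  unfolding F_def by (simp add: frac_le)

lemma w2_eq:
  assumes k: "k \<ge> 3" and a: "0 < a" "a \<le> 1"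
  shows "w2 k a = 1 / real k + F k a - (if 1/2 < a then 1 / real k else 0)"
proof (cases "1/2 < a")
  case True
  have "cls a = 1" using cls_eq[of a 1] True a by simp
  then have "F k a = 1 - 1 / real k" using F_pos[of k a] k by simp
  then show ?thesis using True unfolding w2_def by simp
next
  case False
  show ?thesis
  proof (cases "a \<le> 1 / real k")
    case True
    have "cls a \<ge> k" using cls_ge[of a k] True a k by simp
    then have "F k a = 0" using F_zero k by simp
    then show ?thesis using True False unfolding w2_def by simp
  next
    case nb: False
    have c2: "cls a \<ge> 2" using cls_ge[of a 2] False a by simp
    have ck: "cls a < k"
    proof (rule ccontr)
      assume "\<not> cls a < k"
      then have "real k \<le> real (cls a)" by simp
      then have "1 / real (cls a) \<le> 1 / real k" using k by (simp add: frac_le)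
      moreover have "a \<le> 1 / real (cls a)" using cls_bounds(1)[OF a(1)] c2 a(1)
        by (simp add: field_simps)
      ultimately show False using nb by simp
    qed
    have "(THE j::nat. 2 \<le> j \<and> j \<le> k - 1 \<and> 1 / real (j + 1) < a \<and> a \<le> 1 / real j) = cls a"
    proof (rule the_equality)
      show "2 \<le> cls a \<and> cls a \<le> k - 1 \<and> 1 / real (cls a + 1) < a \<and> a \<le> 1 / real (cls a)"
        using c2 ck cls_lower[OF a(1)] cls_bounds(1)[OF a(1)] a(1) by (simp add: field_simps)
    next
      fix j :: nat assume "2 \<le> j \<and> j \<le> k - 1 \<and> 1 / real (j + 1) < a \<and> a \<le> 1 / real j"
      then show "j = cls a" using cls_eq[of a j] a(1) by (simp add: add.commute)
    qed
    moreover have "F k a = 1 / real (cls a) - 1 / real k" using F_pos[of k a] k c2 ck by simp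
    ultimately show ?thesis using False nb unfolding w2_def by simp
  qed
qed

lemma sum_w2:
  assumes "k \<ge> 3" "\<forall>a\<in>set I. 0 < a \<and> a \<le> 1"
  shows "sum_list (map (w2 k) I) = real (length I) / real k + sum_list (map (F k) I)
     - real (length (filter (\<lambda>a. 1/2 < a) I)) / real k"
  using assms(2)
proof (induction I)
  case Nil then show ?case by simp
next
  case (Cons a I)
  then have e: "w2 k a = 1 / real k + F k a - (if 1/2 < a then 1 / real k else 0)"
    using w2_eq[OF assms(1), of a] by simp
  show ?case using Cons e by (simp add: add_divide_distrib diff_divide_distrib)
qed

lemma sumF_filter:
  assumes "k \<ge> 1"
  shows "sum_list (map (F k) xs) = sum_list (map (F k) (filter (\<lambda>a. cls a < k) xs))"
proof (induction xs)
  case Nil then show ?case by simp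
next
  case (Cons a xs)
  show ?case
  proof (cases "cls a < k")
    case True then show ?thesis using Cons by simp
  next
    case False then have "F k a = 0" using F_zero[OF assms] by simp
    then show ?thesis using Cons False by simp
  qed
qed

lemma sum_filter_le:
  fixes xs :: "real list"
  shows "\<forall>a\<in>set xs. 0 \<le> a \<Longrightarrow> sum_list (filter P xs) \<le> sum_list xs"
  by (induction xs) auto

lemma boundA:
  assumes "\<forall>a\<in>set ys. 0 < a \<and> q \<le> cls a \<and> cls a < k" "q \<ge> 1"
  shows "sum_list (map (F k) ys) \<le> real (length ys) * (1 / real q - 1 / real k)"
  using assms(1)
proof (induction ys)
  case Nil then show ?case by simp
next
  case (Cons a ys)
  have "F k a = 1 / real (cls a) - 1 / real k" using F_pos[of k a] Cons.prems assms(2) by simp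
  moreover have "1 / real (cls a) \<le> 1 / real q" using Cons.prems assms(2) by (simp add: frac_le)
  ultimately show ?case using Cons by (simp add: algebra_simps)
qed

lemma boundB:
  assumes "\<forall>a\<in>set ys. 0 < a \<and> q \<le> cls a \<and> cls a < k" "q \<ge> 1"
  shows "sum_list (map (F k) ys) \<le> (real q + 1) / real q * sum_list ys - real (length ys) / real k"
  using assms(1)
proof (induction ys)
  case Nil then show ?case by simp
next
  case (Cons a ys)
  have a: "0 < a" "q \<le> cls a" "cls a < k" using Cons.prems by auto
  have "F k a = 1 / real (cls a) - 1 / real k" using F_pos[of k a] a assms(2) by simp
  moreover have "1 / real (cls a) \<le> (real q + 1) / real q * a"
  proof -
    define c where "c = real (cls a)"
    have cq: "c \<ge> real q" "real q \<ge> 1" using a assms(2) c_def by auto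
    have "1 / a < c + 1" using cls_bounds(2)[OF a(1)] c_def by simp
    then have l: "1 < (c + 1) * a" using a(1) by (simp add: pos_divide_less_eq)
    have "(real q + 1) * c \<ge> real q * (c + 1)" using cq by (simp add: algebra_simps)
    then have "(real q + 1) * c * a \<ge> real q * (c + 1) * a" using a(1)
      by (intro mult_right_mono) auto
    then have h: "(real q + 1) * c * a \<ge> real q * ((c + 1) * a)" by (simp only: mult.assoc)
    have "real q * 1 < real q * ((c + 1) * a)" using l cq(2) by (intro mult_strict_left_mono) auto
    then have "(real q + 1) * c * a > real q" using h by linarith
    then show ?thesis using cq unfolding c_def[symmetric] by (simp add: field_simps)
  qed
  ultimately show ?case using Cons by (simp add: algebra_simps add_divide_distrib)
qed

lemma aux1: "(y::real) > 0 \<Longrightarrow> (y + 2)/(y+1)*(1/y) = 1/y + 1/(y*(y+1))"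
proof -
  assume y: "y > 0"
  then have a: "y + 1 \<noteq> 0" "y \<noteq> 0" by auto
  show ?thesis using a by (simp add: divide_simps; simp add: algebra_simps)
qed

lemma g_nonneg: "0 \<le> g k i" unfolding g_def by simp

lemma T_two:
  assumes "t + 1 \<le> k"
  shows "g k t + g k (Suc t) \<le> (\<Sum>i=t..k. g k i)"
proof -
  have "(\<Sum>i=t..k. g k i) = g k t + (\<Sum>i=Suc t..k. g k i)"
    using assms by (simp add: sum.atLeast_Suc_atMost)
  also have "(\<Sum>i=Suc t..k. g k i) = g k (Suc t) + (\<Sum>i=Suc (Suc t)..k. g k i)"
    using assms by (simp add: sum.atLeast_Suc_atMost)
  finally show ?thesis using sum_nonneg[of "{Suc (Suc t)..k}" "g k"] g_nonneg by simp
qed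

lemma T_one:
  assumes "t \<le> k"
  shows "g k t \<le> (\<Sum>i=t..k. g k i)"
  using assms g_nonneg by (intro member_le_sum) auto

lemma lemC:
  assumes "k \<ge> 1"
  shows "t \<ge> 1 \<Longrightarrow> \<forall>a\<in>set xs. 0 < a \<Longrightarrow> sum_list xs \<le> 1 / (real (sylv t) - 1)
     \<Longrightarrow> sum_list (map (F k) xs) \<le> (\<Sum>i=t..k. g k i)"
proof (induction "length xs" arbitrary: xs t rule: less_induct)
  case less
  define P where "P = sylv t - 1"
  have s2: "sylv t \<ge> 2" using sylv_ge2 less.prems(1) by simp
  have Pr: "real P = real (sylv t) - 1" using s2 P_def by (simp add: of_nat_diff)
  have P1: "P \<ge> 1" "P \<ge> t" using s2 sylv_ge[OF less.prems(1)] P_def by auto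
  have Tnn: "0 \<le> (\<Sum>i=t..k. g k i)" by (simp add: g_nonneg sum_nonneg)
  have S: "sum_list xs \<le> 1 / real P" using less.prems(3) Pr by simp
  have item: "\<forall>a\<in>set xs. P \<le> cls a"
  proof
    fix a assume a: "a \<in> set xs"
    have "a \<le> sum_list xs" using member_le_sum_list[of a xs] a less.prems(2) by force
    then have "a \<le> 1 / real P" using S by linarith
    moreover have "0 < a" using a less.prems(2) by blast
    ultimately show "P \<le> cls a" using cls_ge[of a P] P1(1) by blast
  qed
  show ?case
  proof (cases "\<exists>x\<in>set xs. cls x = P")
    case True
    then obtain x where x: "x \<in> set xs" "cls x = P" by blast
    define xs' where "xs' = remove1 x xs"
    have len: "length xs' < length xs" using x(1) xs'_def
      by (metis One_nat_def diff_less length_pos_if_in_set length_remove1 zero_less_one)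
    have sx: "sum_list xs = x + sum_list xs'" using sum_list_map_remove1[OF x(1), of id] xs'_def by simp
    have xl: "1 / (real P + 1) < x" using cls_lower[of x] x less.prems(2) by simp
    have "sum_list xs' < 1 / real P - 1 / (real P + 1)" using sx xl less.prems(3) Pr by simp
    also have "\<dots> = 1 / (real (sylv (Suc t)) - 1)"
    proof -
      have r: "real (sylv (Suc t)) - 1 = real P * (real P + 1)" using sylv_rec[OF less.prems(1)] Pr by simp
      have "real P \<ge> 1" using P1 by simp
      then show ?thesis unfolding r by (simp add: field_simps)
    qed
    finally have s': "sum_list xs' \<le> 1 / (real (sylv (Suc t)) - 1)" by simp
    have pos': "\<forall>a\<in>set xs'. 0 < a" using less.prems(2) xs'_def by (meson notin_set_remove1)
    have IH: "sum_list (map (F k) xs') \<le> (\<Sum>i=Suc t..k. g k i)"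
      using less.hyps[OF len, of "Suc t"] pos' s' by simp
    have Fx: "F k x = g k t" unfolding F_def g_def using x(2) Pr by simp
    have split: "sum_list (map (F k) xs) = F k x + sum_list (map (F k) xs')"
      using sum_list_map_remove1[OF x(1)] xs'_def by simp
    show ?thesis
    proof (cases "t \<le> k")
      case True
      then have "(\<Sum>i=t..k. g k i) = g k t + (\<Sum>i=Suc t..k. g k i)" by (simp add: sum.atLeast_Suc_atMost)
      then show ?thesis using split Fx IH by simp
    next
      case False
      then have "real k \<le> real P" using P1 by simp
      then have "1 / real P \<le> 1 / real k" using assms by (simp add: frac_le)
      then have "g k t = 0" unfolding g_def using Pr by simp
      then show ?thesis using split Fx IH False by simp
    qed
  next
    case False
    then have item2: "\<forall>a\<in>set xs. Suc P \<le> cls a" using item by (metis Suc_leI le_neq_implies_less)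
    define ys where "ys = filter (\<lambda>a. cls a < k) xs"
    have eq: "sum_list (map (F k) xs) = sum_list (map (F k) ys)" using sumF_filter[OF assms] ys_def by simp
    have ys: "\<forall>a\<in>set ys. 0 < a \<and> Suc P \<le> cls a \<and> cls a < k" using item2 less.prems(2) ys_def by auto
    have sys: "sum_list ys \<le> 1 / real P"
      using sum_filter_le[of xs "\<lambda>a. cls a < k"] less.prems(2,3) ys_def Pr by force
    consider "length ys = 0" | "length ys = 1" | "length ys \<ge> 2" by linarith
    then show ?thesis
    proof cases
      case 1 then show ?thesis using eq Tnn by simp
    next
      case 2
      then obtain a where "a \<in> set ys" by (metis length_0_conv list.set_intros(1) neq_Nil_conv zero_neq_one)
      then have Pk: "Suc P < k" using ys by force
      then have tk: "t \<le> k" using P1 by simp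
      have "sum_list (map (F k) ys) \<le> 1 / real (Suc P) - 1 / real k" using boundA[OF ys] 2 by simp
      also have "\<dots> \<le> g k t" unfolding g_def using Pr P1
        by (simp add: frac_le le_max_iff_disj)
      also have "g k t \<le> (\<Sum>i=t..k. g k i)" using T_one[OF tk] .
      finally show ?thesis using eq by simp
    next
      case 3
      then obtain a where "a \<in> set ys" by (metis length_0_conv list.set_intros(1) neq_Nil_conv not_numeral_le_zero)
      then have Pk: "Suc P < k" using ys by force
      then have tk: "t + 1 \<le> k" using P1 by simp
      have rP: "real P \<ge> 1" using P1 by simp
      have "sum_list (map (F k) ys) \<le> (real (Suc P) + 1) / real (Suc P) * sum_list ys - real (length ys) / real k"
        using boundB[OF ys] by simp
      also have "\<dots> \<le> (real P + 2) / (real P + 1) * (1 / real P) - 2 / real k"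
      proof -
        have "(real (Suc P) + 1) / real (Suc P) * sum_list ys \<le> (real P + 2) / (real P + 1) * (1 / real P)"
        proof -
          have e: "(real (Suc P) + 1) / real (Suc P) = (real P + 2) / (real P + 1)" by (simp add: add.commute)
          have "0 \<le> (real P + 2) / (real P + 1)" by simp
          then show ?thesis unfolding e using sys mult_left_mono by blast
        qed
        moreover have "2 / real k \<le> real (length ys) / real k" using 3 by (simp add: divide_right_mono)
        ultimately show ?thesis by linarith
      qed
      also have "\<dots> = (1 / real P - 1 / real k) + (1 / (real P * (real P + 1)) - 1 / real k)"
      proof -
        have x: "real P > 0" "real P + 1 > 0" using rP by auto
        have "(real P + 2) / (real P + 1) * (1 / real P) = 1 / real P + 1 / (real P * (real P + 1))"
          using aux1[OF x(1)] .
        then show ?thesis by linarith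
      qed
      also have "\<dots> \<le> g k t + g k (Suc t)"
      proof -
        have r: "real (sylv (Suc t)) - 1 = real P * (real P + 1)" using sylv_rec[OF less.prems(1)] Pr by simp
        have r2: "real (sylv t) - 1 = real P" using Pr by simp
        show ?thesis unfolding g_def r r2 by (intro add_mono max.cobounded2)
      qed
      also have "\<dots> \<le> (\<Sum>i=t..k. g k i)" using T_two[OF tk] .
      finally show ?thesis using eq by simp
    qed
  qed
qed


lemma lam_eq: assumes "k \<ge> 1" shows "lam k = 1 + (\<Sum>i=1..k. g k i)"
proof -
  have "lam k = (\<Sum>i=1..k. 1 / real k + g k i)"
    unfolding lam_def g_def by (intro sum.cong) (auto simp: max_def)
  also have "\<dots> = real k * (1 / real k) + (\<Sum>i=1..k. g k i)" by (simp add: sum.distrib)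
  also have "real k * (1 / real k) = 1" using assms by simp
  finally show ?thesis .
qed

theorem lemma3:
  fixes k :: nat and I :: "real list"
  assumes "k \<ge> 3"
    and "length I \<le> k"
    and "\<forall>a \<in> set I. 0 < a \<and> a \<le> 1"
    and "sum_list I \<le> 1"
  shows "sum_list (map (w2 k) I) \<le> lam k - 1 / real k"
proof -
  have k1: "k \<ge> 1" using assms(1) by simp
  have rk: "real k \<ge> 3" using assms(1) by simp
  define T where "T = (\<Sum>i=1..k. g k i)"
  define B where "B = length (filter (\<lambda>a. 1/2 < a) I)"
  have pos: "\<forall>a\<in>set I. 0 < a" using assms(3) by blast
  have C1: "sum_list (map (F k) I) \<le> T"
    using lemC[OF k1, of 1 I] pos assms(4) unfolding T_def by simp
  have sw: "sum_list (map (w2 k) I) = real (length I) / real k + sum_list (map (F k) I) - real B / real k"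
    using sum_w2[OF assms(1,3), folded B_def] .
  have lk: "lam k - 1 / real k = 1 - 1 / real k + T" using lam_eq[OF k1] unfolding T_def by simp
  show ?thesis
  proof (cases "length I < k \<or> B \<ge> 1")
    case True
    then have "real (length I) - real B \<le> real k - 1" using assms(2) by linarith
    then have "real (length I) / real k - real B / real k \<le> (real k - 1) / real k"
      using rk by (simp add: divide_right_mono diff_divide_distrib[symmetric])
    also have "\<dots> = 1 - 1 / real k" using rk by (simp add: field_simps)
    finally show ?thesis using sw C1 lk by linarith
  next
    case False
    then have n: "length I = k" and B0: "B = 0" using assms(2) by auto
    have small: "\<forall>a\<in>set I. \<not> 1/2 < a" using B0 unfolding B_def by (simp add: filter_empty_conv)
    have g12: "g k 1 + g k 2 \<le> T" unfolding T_def using T_two[of 1 k] assms(1) by (simp add: numeral_2_eq_2)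
    have s2: "sylv 2 = 3" by (simp add: numeral_2_eq_2)
    have g1: "g k 1 = 1 - 1 / real k" unfolding g_def using rk by simp
    have g2: "g k 2 = 1/2 - 1 / real k" unfolding g_def s2 using rk by (simp add: field_simps)
    define ys where "ys = filter (\<lambda>a. cls a < k) I"
    have eq: "sum_list (map (F k) I) = sum_list (map (F k) ys)" using sumF_filter[OF k1] ys_def by simp
    have ys: "\<forall>a\<in>set ys. 0 < a \<and> 2 \<le> cls a \<and> cls a < k"
    proof
      fix a assume a: "a \<in> set ys"
      then have a': "a \<in> set I" "cls a < k" using ys_def by auto
      then have "0 < a" "a \<le> 1 / real 2" using pos small by auto
      then have "2 \<le> cls a" using cls_ge[of a 2] by simp
      then show "0 < a \<and> 2 \<le> cls a \<and> cls a < k" using a' \<open>0 < a\<close> by simp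
    qed
    have sys: "sum_list ys \<le> 1" using sum_filter_le[of I "\<lambda>a. cls a < k"] pos assms(4) ys_def by force
    have "sum_list (map (F k) ys) \<le> 3/2 - 3 / real k"
    proof (cases "length ys \<le> 2")
      case True
      have "sum_list (map (F k) ys) \<le> real (length ys) * (1 / real 2 - 1 / real k)" using boundA[OF ys] by simp
      also have "\<dots> = real (length ys) * (1 / 2 - 1 / real k)" by simp
      also have "\<dots> \<le> 2 * (1 / 2 - 1 / real k)"
      proof (rule mult_right_mono)
        show "real (length ys) \<le> 2" using True by simp
        show "0 \<le> 1 / 2 - 1 / real k" using rk by (simp add: field_simps)
      qed
      also have "\<dots> \<le> 3/2 - 3 / real k" using rk by (simp add: field_simps)
      finally show ?thesis .
    next
      case False
      have "sum_list (map (F k) ys) \<le> (real 2 + 1) / real 2 * sum_list ys - real (length ys) / real k"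
        using boundB[OF ys] by simp
      also have "\<dots> \<le> 3/2 - 3 / real k"
      proof -
        have "(real 2 + 1) / real 2 * sum_list ys \<le> 3/2" using sys by simp
        moreover have "3 / real k \<le> real (length ys) / real k" using False rk by (simp add: divide_right_mono)
        ultimately show ?thesis by linarith
      qed
      finally show ?thesis .
    qed
    then have "sum_list (map (F k) I) \<le> T - 1 / real k" using eq g12 g1 g2 by simp
    moreover have "real (length I) / real k = 1" using n rk by simp
    moreover have "real B / real k = 0" using B0 by simp
    ultimately show ?thesis using sw lk by linarith
  qed
qed

end
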